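(* Let $\mathcal{A}$ be a fully probabilistic finite automaton, $\varphi \subseteq CRun(\mathcal{A})$ a predicate and $\mathcal{O}: CRun(\mathcal{A}) \to Obs$ a surjective observation function. Then: (1) $0 \leq \mathrm{PO}^A_\ell(\mathcal{A},\varphi,\mathcal{O}) \leq 1$ and $0 \leq \mathrm{PO}^S_\ell(\mathcal{A},\varphi,\mathcal{O}) \leq 1$. (2) $\mathrm{PO}^A_\ell(\mathcal{A},\varphi,\mathcal{O}) = 0$ if and only if $\varphi$ is opaque on $\mathit{unProb}(\mathcal{A})$ with respect to $\mathit{unProb}(\mathcal{O})$; and $\mathrm{PO}^S_\ell(\mathcal{A},\varphi,\mathcal{O}) = 0$ if and only if $\varphi$ is symmetrically opaque on $\mathit{unProb}(\mathcal{A})$ with respect to $\mathit{unProb}(\mathcal{O})$. (3) $\mathrm{PO}^A_\ell(\mathcal{A},\varphi,\mathcal{O}) = 1$ if and only if $\varphi = CRun(\mathcal{A})$; and $\mathrm{PO}^S_\ell(\mathcal{A},\varphi,\mathcal{O}) = 1$ if and only if $H(\mathbf{1}_{\varphi} \mid \mathcal{O}) = 0$.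
   Context: A fully probabilistic finite automaton (FPFA) is a tuple $\langle \Sigma, Q, \Delta, q_0\rangle$ with $\Sigma$ a finite alphabet, $Q$ a finite set of states, $q_0$ the initial state, and $\Delta: Q \to ((\Sigma\times Q)\uplus\{\mathrm{stop}\} \to [0,1])$ where $\mathrm{stop}$ is a special termination action, such that for each $q$, $\Delta(q)$ is a probability distribution and from every state there is a positive-probability path to a final state (a state $q$ with $\Delta(q)(\mathrm{stop})>0$). A run is a finite sequence $q_0 \xrightarrow{a_1} q_1 \cdots \xrightarrow{a_n} q_n$ with $\Delta(q_{i-1})(a_i,q_i)>0$; a complete run is $\rho\cdot\mathrm{stop}$ with $\Delta(q_n)(\mathrm{stop})>0$; $CRun(\mathcal{A})$ is the set of complete runs from $q_0$. The probability of a complete run is defined by $\mathbf{P}(q\,\mathrm{stop}) = \Delta(q)(\mathrm{stop})$ and $\mathbf{P}(q\xrightarrow{a}\rho) = \Delta(q)(a,r)\cdot\mathbf{P}(\rho)$ with $r$ the first state of $\rho$; this is a distribution on $CRun(\mathcal{A})$. $\mathbf{1}_\varphi$ and $\mathcal{O}$ are viewed as random variables on $CRun(\mathcal{A})$. Liberal probabilistic opacity: $\mathrm{PO}^A_\ell(\mathcal{A},\varphi,\mathcal{O}) = \sum_{o\in Obs,\ \mathcal{O}^{-1}(o)\subseteq\varphi} \mathbf{P}(\mathcal{O}=o)$; liberal probabilistic symmetrical opacity: $\mathrm{PO}^S_\ell(\mathcal{A},\varphi,\mathcal{O}) = \mathrm{PO}^A_\ell(\mathcal{A},\varphi,\mathcal{O})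 + \mathrm{PO}^A_\ell(\mathcal{A},\overline\varphi,\mathcal{O})$. $\mathit{unProb}(\mathcal{A})$ is the nondeterministic finite automaton with transitions $\{(q,a,r) : \Delta(q)(a,r)>0\}$, initial state $q_0$, and final states $\{q : \Delta(q)(\mathrm{stop})>0\}$; $\mathit{unProb}(\mathcal{O})(q_0\xrightarrow{a_1}\cdots q_n) = \mathcal{O}(q_0\xrightarrow{a_1}\cdots q_n\,\mathrm{stop})$. A predicate $\varphi$ is opaque for $\mathcal{O}$ if for every $o\in Obs$, $\mathcal{O}^{-1}(o)\not\subseteq\varphi$; it is symmetrically opaque if moreover $\mathcal{O}^{-1}(o)\not\subseteq\overline\varphi$ for every $o$. $H(\cdot\mid\cdot)$ is conditional Shannon entropy (base-2 logarithm). *)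

theory Defs
  imports "HOL-Probability.Probability_Mass_Function"
begin

text \<open>The transition function maps
each state to a probability distribution over (letter, successor) pairs
(Some (a, r)) and the special termination action stop (None).\<close>

type_synonym ('a, 's) fpfa_trans = "'s \<Rightarrow> ('a \<times> 's) option pmf"

text \<open>A run q0 -a1-> q1 ... -an-> qn is represented by its start state q0 and the
list [(a1,q1),...,(an,qn)].  A complete run q0 ... qn stop is represented by the
same list (the trailing stop being implicit).\<close>

fun last_st :: "'s \<Rightarrow> ('a \<times> 's) list \<Rightarrow> 's" where
  "last_st q [] = q"
| "last_st q ((a, r) # \<rho>) = last_st r \<rho>"

fun is_run :: "('a, 's) fpfa_trans \<Rightarrow> 's \<Rightarrow> ('a \<times> 's) list \<Rightarrow> bool" where
  "is_run \<Delta> q [] = True"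
| "is_run \<Delta> q ((a, r) # \<rho>) = (pmf (\<Delta> q) (Some (a, r)) > 0 \<and> is_run \<Delta> r \<rho>)"

definition is_final :: "('a, 's) fpfa_trans \<Rightarrow> 's \<Rightarrow> bool" where
  "is_final \<Delta> q \<longleftrightarrow> pmf (\<Delta> q) None > 0"

definition fpfa :: "('a::finite, 's::finite) fpfa_trans \<Rightarrow> bool" where
  "fpfa \<Delta> \<longleftrightarrow> (\<forall>q. \<exists>\<rho>. is_run \<Delta> q \<rho> \<and> is_final \<Delta> (last_st q \<rho>))"

definition CRun :: "('a, 's) fpfa_trans \<Rightarrow> 's \<Rightarrow> ('a \<times> 's) list set" where
  "CRun \<Delta> q0 = {\<rho>. is_run \<Delta> q0 \<rho> \<and> is_final \<Delta> (last_st q0 \<rho>)}"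

fun run_prob :: "('a, 's) fpfa_trans \<Rightarrow> 's \<Rightarrow> ('a \<times> 's) list \<Rightarrow> real" where
  "run_prob \<Delta> q [] = pmf (\<Delta> q) None"
| "run_prob \<Delta> q ((a, r) # \<rho>) = pmf (\<Delta> q) (Some (a, r)) * run_prob \<Delta> r \<rho>"

definition Prob :: "('a, 's) fpfa_trans \<Rightarrow> 's \<Rightarrow> ('a \<times> 's) list set \<Rightarrow> real" where
  "Prob \<Delta> q0 S = (\<Sum>\<^sub>\<infinity>\<rho>\<in>S \<inter> CRun \<Delta> q0. run_prob \<Delta> q0 \<rho>)"

definition preimg :: "('a, 's) fpfa_trans \<Rightarrow> 's \<Rightarrow> (('a \<times> 's) list \<Rightarrow> 'o) \<Rightarrow> 'o \<Rightarrow> ('a \<times> 's) list set" where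
  "preimg \<Delta> q0 Obf ob = {\<rho> \<in> CRun \<Delta> q0. Obf \<rho> = ob}"

definition PO_A :: "('a, 's) fpfa_trans \<Rightarrow> 's \<Rightarrow> ('a \<times> 's) list set \<Rightarrow>
    (('a \<times> 's) list \<Rightarrow> 'o) \<Rightarrow> 'o set \<Rightarrow> real" where
  "PO_A \<Delta> q0 \<phi> Obf Obs =
     (\<Sum>\<^sub>\<infinity>ob\<in>{ob \<in> Obs. preimg \<Delta> q0 Obf ob \<subseteq> \<phi>}. Prob \<Delta> q0 (preimg \<Delta> q0 Obf ob))"

definition PO_S :: "('a, 's) fpfa_trans \<Rightarrow> 's \<Rightarrow> ('a \<times> 's) list set \<Rightarrow>
    (('a \<times> 's) list \<Rightarrow> 'o) \<Rightarrow> 'o set \<Rightarrow> real" where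
  "PO_S \<Delta> q0 \<phi> Obf Obs = PO_A \<Delta> q0 \<phi> Obf Obs + PO_A \<Delta> q0 (CRun \<Delta> q0 - \<phi>) Obf Obs"

record ('a, 's) nfa =
  trans :: "('s \<times> 'a \<times> 's) set"
  init :: 's
  final :: "'s set"

fun nfa_run :: "('a, 's) nfa \<Rightarrow> 's \<Rightarrow> ('a \<times> 's) list \<Rightarrow> bool" where
  "nfa_run N q [] = True"
| "nfa_run N q ((a, r) # \<rho>) = ((q, a, r) \<in> trans N \<and> nfa_run N r \<rho>)"

definition acc_runs :: "('a, 's) nfa \<Rightarrow> ('a \<times> 's) list set" where
  "acc_runs N = {\<rho>. nfa_run N (init N) \<rho> \<and> last_st (init N) \<rho> \<in> final N}"

definition unProb :: "('a, 's) fpfa_trans \<Rightarrow> 's \<Rightarrow> ('a, 's) nfa" where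
  "unProb \<Delta> q0 = \<lparr>trans = {(q, a, r). pmf (\<Delta> q) (Some (a, r)) > 0}, init = q0,
                   final = {q. pmf (\<Delta> q) None > 0}\<rparr>"

text \<open>unProb(Obf)(rho) = Obf(rho stop); since a complete run rho stop is represented by
the same list as rho, this is Obf itself.\<close>
definition unProb_obs :: "(('a \<times> 's) list \<Rightarrow> 'o) \<Rightarrow> ('a \<times> 's) list \<Rightarrow> 'o" where
  "unProb_obs Obf = (\<lambda>\<rho>. Obf \<rho>)"

definition opaque :: "('a, 's) nfa \<Rightarrow> ('a \<times> 's) list set \<Rightarrow> (('a \<times> 's) list \<Rightarrow> 'o) \<Rightarrow> 'o set \<Rightarrow> bool" where
  "opaque N \<phi> Obf Obs \<longleftrightarrow> (\<forall>ob\<in>Obs. \<not> {\<rho> \<in> acc_runs N. Obf \<rho> = ob} \<subseteq> \<phi>)"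

definition sym_opaque :: "('a, 's) nfa \<Rightarrow> ('a \<times> 's) list set \<Rightarrow> (('a \<times> 's) list \<Rightarrow> 'o) \<Rightarrow> 'o set \<Rightarrow> bool" where
  "sym_opaque N \<phi> Obf Obs \<longleftrightarrow> opaque N \<phi> Obf Obs \<and>
     (\<forall>ob\<in>Obs. \<not> {\<rho> \<in> acc_runs N. Obf \<rho> = ob} \<subseteq> acc_runs N - \<phi>)"

definition cond_entropy :: "('r set \<Rightarrow> real) \<Rightarrow> 'r set \<Rightarrow> ('r \<Rightarrow> 'x) \<Rightarrow> ('r \<Rightarrow> 'y) \<Rightarrow> real" where
  "cond_entropy P \<Omega> X Y =
     infsum (\<lambda>(x, y). let j = P {\<omega> \<in> \<Omega>. X \<omega> = x \<and> Y \<omega> = y}; m = P {\<omega> \<in> \<Omega>. Y \<omega> = y}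
                      in if j = 0 then 0 else - j * log 2 (j / m))
            (X ` \<Omega> \<times> Y ` \<Omega>)"

end

theory Submission
  imports Defs "HOL-Analysis.Analysis"
begin


lemma run_prob_nonneg: "run_prob \<Delta> q \<rho> \<ge> 0"
proof (induction \<Delta> q \<rho> rule: run_prob.induct)
  case (2 \<Delta> q a r \<rho>) then show ?case by simp
qed simp

lemma run_prob_pos_iff: "run_prob \<Delta> q \<rho> > 0 \<longleftrightarrow> \<rho> \<in> CRun \<Delta> q"
proof (induction \<Delta> q \<rho> rule: run_prob.induct)
  case (1 \<Delta> q)
  then show ?case by (simp add: CRun_def is_final_def)
next
  case (2 \<Delta> q a r \<rho>)
  have "run_prob \<Delta> q ((a, r) # \<rho>) > 0 \<longleftrightarrow> pmf (\<Delta> q) (Some (a, r)) > 0 \<and> run_prob \<Delta> r \<rho> > 0"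
    using run_prob_nonneg[of \<Delta> r \<rho>] pmf_nonneg[of "\<Delta> q" "Some (a,r)"]
    by (simp add: zero_less_mult_iff)
  then show ?case using 2 by (simp add: CRun_def)
qed

lemma run_prob_zero: "\<rho> \<notin> CRun \<Delta> q \<Longrightarrow> run_prob \<Delta> q \<rho> = 0"
  using run_prob_pos_iff run_prob_nonneg by (metis less_eq_real_def)

fun stopw :: "('a::finite,'s::finite) fpfa_trans \<Rightarrow> nat \<Rightarrow> 's \<Rightarrow> real" where
  "stopw \<Delta> 0 q = 0"
| "stopw \<Delta> (Suc n) q = pmf (\<Delta> q) None + (\<Sum>x\<in>UNIV. pmf (\<Delta> q) (Some x) * stopw \<Delta> n (snd x))"

fun surv :: "('a::finite,'s::finite) fpfa_trans \<Rightarrow> nat \<Rightarrow> 's \<Rightarrow> real" where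
  "surv \<Delta> 0 q = 1"
| "surv \<Delta> (Suc n) q = (\<Sum>x\<in>UNIV. pmf (\<Delta> q) (Some x) * surv \<Delta> n (snd x))"

lemma pmf_total:
  fixes \<Delta> :: "('a::finite,'s::finite) fpfa_trans"
  shows "pmf (\<Delta> q) None + (\<Sum>x\<in>UNIV. pmf (\<Delta> q) (Some x)) = 1"
proof -
  have "(\<Sum>x\<in>UNIV. pmf (\<Delta> q) x) = 1" by (rule sum_pmf_eq_1) auto
  moreover have "(\<Sum>x\<in>UNIV. pmf (\<Delta> q) x) = pmf (\<Delta> q) None + (\<Sum>x\<in>range Some. pmf (\<Delta> q) x)"
    by (subst UNIV_option_conv) (rule sum.insert, auto)
  moreover have "(\<Sum>x\<in>range Some. pmf (\<Delta> q) x) = (\<Sum>x\<in>UNIV. pmf (\<Delta> q) (Some x))"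
    by (subst sum.reindex) auto
  ultimately show ?thesis by simp
qed

lemma surv_nonneg: "surv \<Delta> n q \<ge> 0"
  by (induction n arbitrary: q) (auto intro!: sum_nonneg)

lemma stop_surv: "stopw \<Delta> n q + surv \<Delta> n q = 1"
proof (induction n arbitrary: q)
  case 0 then show ?case by simp
next
  case (Suc n)
  have "stopw \<Delta> (Suc n) q + surv \<Delta> (Suc n) q
      = pmf (\<Delta> q) None + (\<Sum>x\<in>UNIV. pmf (\<Delta> q) (Some x) * (stopw \<Delta> n (snd x) + surv \<Delta> n (snd x)))"
    by (simp add: distrib_left sum.distrib)
  also have "\<dots> = 1" using Suc pmf_total[of \<Delta> q] by simp
  finally show ?case .
qed

lemma len_set_Suc: "{\<rho>::'b list. length \<rho> < Suc n} = insert [] ((\<lambda>(x,\<rho>). x#\<rho>) ` (UNIV \<times> {\<rho>. length \<rho> < n}))"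
proof (rule set_eqI)
  fix \<rho> :: "'b list"
  show "\<rho> \<in> {\<rho>. length \<rho> < Suc n} \<longleftrightarrow> \<rho> \<in> insert [] ((\<lambda>(x,\<rho>). x#\<rho>) ` (UNIV \<times> {\<rho>. length \<rho> < n}))"
  proof (cases \<rho>)
    case Nil then show ?thesis by simp
  next
    case (Cons x r)
    have "x # r \<in> (\<lambda>(x,\<rho>). x#\<rho>) ` (UNIV \<times> {\<rho>. length \<rho> < n}) \<longleftrightarrow> length r < n"
      by (auto simp: image_iff)
    then show ?thesis using Cons by simp
  qed
qed

lemma finite_len: "finite {\<rho>::('b::finite) list. length \<rho> < n}"
  by (induction n) (auto simp: len_set_Suc)

lemma stopw_eq: "stopw \<Delta> n q = (\<Sum>\<rho>\<in>{\<rho>. length \<rho> < n}. run_prob \<Delta> q \<rho>)"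
proof (induction n arbitrary: q)
  case 0 then show ?case by simp
next
  case (Suc n)
  have inj: "inj_on (\<lambda>(x,\<rho>). x#\<rho>) (UNIV \<times> {\<rho>. length \<rho> < n})"
    by (auto simp: inj_on_def)
  have "(\<Sum>\<rho>\<in>{\<rho>. length \<rho> < Suc n}. run_prob \<Delta> q \<rho>)
     = run_prob \<Delta> q [] + (\<Sum>\<rho>\<in>(\<lambda>(x,\<rho>). x#\<rho>) ` (UNIV \<times> {\<rho>. length \<rho> < n}). run_prob \<Delta> q \<rho>)"
    unfolding len_set_Suc by (rule sum.insert) (auto intro!: finite_imageI finite_cartesian_product finite_len)
  also have "(\<Sum>\<rho>\<in>(\<lambda>(x,\<rho>). x#\<rho>) ` (UNIV \<times> {\<rho>. length \<rho> < n}). run_prob \<Delta> q \<rho>)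
     = (\<Sum>(x,\<rho>)\<in>UNIV \<times> {\<rho>. length \<rho> < n}. run_prob \<Delta> q (x#\<rho>))"
    by (subst sum.reindex[OF inj]) (simp add: case_prod_unfold)
  also have "\<dots> = (\<Sum>x\<in>UNIV. \<Sum>\<rho>\<in>{\<rho>. length \<rho> < n}. run_prob \<Delta> q (x#\<rho>))"
    by (rule sum.cartesian_product[symmetric])
  also have "\<dots> = (\<Sum>x\<in>UNIV. pmf (\<Delta> q) (Some x) * stopw \<Delta> n (snd x))"
    by (auto simp: Suc sum_distrib_left intro!: sum.cong)
  finally show ?case by simp
qed

lemma surv_mult:
  assumes "\<And>q. surv \<Delta> N q \<le> c"
  shows "surv \<Delta> (n + N) q \<le> c * surv \<Delta> n q"
proof (induction n arbitrary: q)
  case 0 then show ?case using assms by simp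
next
  case (Suc n)
  have "surv \<Delta> (Suc n + N) q = (\<Sum>x\<in>UNIV. pmf (\<Delta> q) (Some x) * surv \<Delta> (n + N) (snd x))" by simp
  also have "\<dots> \<le> (\<Sum>x\<in>UNIV. pmf (\<Delta> q) (Some x) * (c * surv \<Delta> n (snd x)))"
    by (intro sum_mono mult_left_mono Suc) auto
  also have "\<dots> = c * surv \<Delta> (Suc n) q" by (simp add: sum_distrib_left algebra_simps)
  finally show ?case .
qed

lemma surv_pow:
  assumes "\<And>q. surv \<Delta> N q \<le> c" "c \<ge> 0"
  shows "surv \<Delta> (k * N) q \<le> c ^ k"
proof (induction k arbitrary: q)
  case 0 then show ?case by simp
next
  case (Suc k)
  have "surv \<Delta> (Suc k * N) q = surv \<Delta> (k * N + N) q" by (simp add: add.commute)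
  also have "\<dots> \<le> c * surv \<Delta> (k * N) q" by (rule surv_mult[OF assms(1)])
  also have "\<dots> \<le> c * c ^ k" using Suc assms(2) by (intro mult_left_mono) auto
  finally show ?case by simp
qed



lemma finite_sum_le1:
  fixes \<Delta> :: "('a::finite,'s::finite) fpfa_trans"
  assumes "finite F"
  shows "sum (run_prob \<Delta> q) F \<le> 1"
proof -
  let ?L = "{\<rho>::('a\<times>'s) list. length \<rho> < Suc (Max (length ` F))}"
  have sub: "F \<subseteq> ?L" using assms by (auto simp: le_imp_less_Suc)
  have "sum (run_prob \<Delta> q) F \<le> sum (run_prob \<Delta> q) ?L"
    by (rule sum_mono2[OF finite_len sub]) (simp add: run_prob_nonneg)
  also have "\<dots> = stopw \<Delta> (Suc (Max (length ` F))) q" by (simp add: stopw_eq)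
  also have "\<dots> \<le> 1" using stop_surv[of \<Delta> "Suc (Max (length ` F))" q] surv_nonneg[of \<Delta> "Suc (Max (length ` F))" q] by linarith
  finally show ?thesis .
qed

lemma run_prob_summable:
  fixes \<Delta> :: "('a::finite,'s::finite) fpfa_trans"
  shows "run_prob \<Delta> q summable_on A"
proof -
  have "run_prob \<Delta> q summable_on UNIV"
    by (rule nonneg_bdd_above_summable_on) (auto simp: run_prob_nonneg bdd_above_def intro!: exI[of _ 1] finite_sum_le1)
  then show ?thesis by (rule summable_on_subset) simp
qed

lemma fpfa_bound:
  fixes \<Delta> :: "('a::finite,'s::finite) fpfa_trans"
  assumes "fpfa \<Delta>"
  shows "\<exists>N c. c < 1 \<and> c \<ge> 0 \<and> (\<forall>q. surv \<Delta> N q \<le> c)"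
proof -
  have "\<forall>q. \<exists>\<rho>. \<rho> \<in> CRun \<Delta> q" using assms by (auto simp: fpfa_def CRun_def)
  then obtain \<rho> where \<rho>: "\<And>q. \<rho> q \<in> CRun \<Delta> q" by metis
  define N where "N = Suc (Max (range (\<lambda>q. length (\<rho> q))))"
  define \<epsilon> where "\<epsilon> = Min (range (\<lambda>q. run_prob \<Delta> q (\<rho> q)))"
  have epos: "\<epsilon> > 0" unfolding \<epsilon>_def using \<rho> by (subst Min_gr_iff) (auto simp: run_prob_pos_iff)
  have b: "surv \<Delta> N q \<le> 1 - \<epsilon>" for q
  proof -
    have "length (\<rho> q) < N" unfolding N_def by (simp add: le_imp_less_Suc)
    then have "run_prob \<Delta> q (\<rho> q) \<le> stopw \<Delta> N q" unfolding stopw_eq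
      by (intro member_le_sum) (auto simp: run_prob_nonneg finite_len)
    moreover have "\<epsilon> \<le> run_prob \<Delta> q (\<rho> q)" unfolding \<epsilon>_def by (rule Min_le) auto
    ultimately show ?thesis using stop_surv[of \<Delta> N q] by linarith
  qed
  have "0 \<le> 1 - \<epsilon>" using b[of undefined] surv_nonneg[of \<Delta> N undefined] by linarith
  then show ?thesis using b epos by (intro exI[of _ N] exI[of _ "1 - \<epsilon>"]) auto
qed

lemma total_prob:
  fixes \<Delta> :: "('a::finite,'s::finite) fpfa_trans"
  assumes "fpfa \<Delta>"
  shows "infsum (run_prob \<Delta> q) UNIV = 1"
proof -
  obtain N c where c: "c < 1" "c \<ge> 0" "\<And>q. surv \<Delta> N q \<le> c" using fpfa_bound[OF assms] by blast
  have le: "infsum (run_prob \<Delta> q) UNIV \<le> 1"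
    by (rule infsum_le_finite_sums) (auto simp: run_prob_summable finite_sum_le1)
  have ge: "1 - c ^ k \<le> infsum (run_prob \<Delta> q) UNIV" for k
  proof -
    have "1 - c ^ k \<le> stopw \<Delta> (k * N) q" using surv_pow[of \<Delta> N c k q, OF c(3) c(2)] stop_surv[of \<Delta> "k*N" q] by linarith
    also have "\<dots> \<le> infsum (run_prob \<Delta> q) UNIV" unfolding stopw_eq
      by (rule finite_sum_le_infsum) (auto simp: run_prob_summable finite_len run_prob_nonneg)
    finally show ?thesis .
  qed
  show ?thesis
  proof (rule ccontr)
    assume "infsum (run_prob \<Delta> q) UNIV \<noteq> 1"
    then have "1 - infsum (run_prob \<Delta> q) UNIV > 0" using le by linarith
    then obtain k where "c ^ k < 1 - infsum (run_prob \<Delta> q) UNIV" using real_arch_pow_inv c(1) by blast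
    then show False using ge[of k] by linarith
  qed
qed



lemma Prob_eq:
  fixes \<Delta> :: "('a::finite,'s::finite) fpfa_trans"
  shows "Prob \<Delta> q S = infsum (run_prob \<Delta> q) S"
  unfolding Prob_def by (rule infsum_cong_neutral) (auto simp: run_prob_zero)

lemma P_restrict:
  fixes \<Delta> :: "('a::finite,'s::finite) fpfa_trans"
  shows "infsum (run_prob \<Delta> q) S = infsum (run_prob \<Delta> q) (S \<inter> CRun \<Delta> q)"
  by (rule infsum_cong_neutral) (auto simp: run_prob_zero)

lemma P_nonneg: "infsum (run_prob \<Delta> q) S \<ge> 0"
  by (rule infsum_nonneg) (simp add: run_prob_nonneg)

lemma P_pos:
  fixes \<Delta> :: "('a::finite,'s::finite) fpfa_trans"
  assumes "\<rho> \<in> S" "\<rho> \<in> CRun \<Delta> q"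
  shows "infsum (run_prob \<Delta> q) S > 0"
proof -
  have "run_prob \<Delta> q \<rho> > 0" using assms by (simp add: run_prob_pos_iff)
  also have "run_prob \<Delta> q \<rho> = sum (run_prob \<Delta> q) {\<rho>}" by simp
  also have "\<dots> \<le> infsum (run_prob \<Delta> q) S"
    by (rule finite_sum_le_infsum) (auto simp: run_prob_summable run_prob_nonneg assms)
  finally show ?thesis .
qed

lemma P_zero_iff:
  fixes \<Delta> :: "('a::finite,'s::finite) fpfa_trans"
  shows "infsum (run_prob \<Delta> q) S = 0 \<longleftrightarrow> S \<inter> CRun \<Delta> q = {}"
proof
  assume 0: "infsum (run_prob \<Delta> q) S = 0"
  show "S \<inter> CRun \<Delta> q = {}"
  proof (rule ccontr)
    assume "S \<inter> CRun \<Delta> q \<noteq> {}"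
    then obtain \<rho> where "\<rho> \<in> S" "\<rho> \<in> CRun \<Delta> q" by blast
    from P_pos[OF this] 0 show False by simp
  qed
next
  assume "S \<inter> CRun \<Delta> q = {}" then show "infsum (run_prob \<Delta> q) S = 0"
    by (subst P_restrict) simp
qed

lemma P_add:
  fixes \<Delta> :: "('a::finite,'s::finite) fpfa_trans"
  assumes "S \<inter> T = {}"
  shows "infsum (run_prob \<Delta> q) (S \<union> T) = infsum (run_prob \<Delta> q) S + infsum (run_prob \<Delta> q) T"
  by (rule infsum_Un_disjoint) (auto simp: run_prob_summable assms)

lemma P_le1:
  fixes \<Delta> :: "('a::finite,'s::finite) fpfa_trans"
  assumes "fpfa \<Delta>"
  shows "infsum (run_prob \<Delta> q) S \<le> 1"
proof -
  have "infsum (run_prob \<Delta> q) S \<le> infsum (run_prob \<Delta> q) UNIV"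
    by (rule infsum_mono2) (auto simp: run_prob_summable run_prob_nonneg)
  then show ?thesis using total_prob[OF assms] by simp
qed

lemma P_one_iff:
  fixes \<Delta> :: "('a::finite,'s::finite) fpfa_trans"
  assumes "fpfa \<Delta>"
  shows "infsum (run_prob \<Delta> q) S = 1 \<longleftrightarrow> CRun \<Delta> q \<subseteq> S"
proof -
  have "infsum (run_prob \<Delta> q) S + infsum (run_prob \<Delta> q) (UNIV - S) = 1"
    using P_add[of S "UNIV - S" \<Delta> q] total_prob[OF assms, of q] by (simp add: Un_Diff_cancel)
  then have "infsum (run_prob \<Delta> q) S = 1 \<longleftrightarrow> infsum (run_prob \<Delta> q) (UNIV - S) = 0" by linarith
  also have "\<dots> \<longleftrightarrow> CRun \<Delta> q \<subseteq> S" by (subst P_zero_iff) auto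
  finally show ?thesis .
qed

lemma partition_sum:
  fixes \<Delta> :: "('a::finite,'s::finite) fpfa_trans" and K :: "('a \<times> 's) list \<Rightarrow> 'k"
  shows "infsum (\<lambda>k. infsum (run_prob \<Delta> q) {\<omega> \<in> CRun \<Delta> q. K \<omega> = k}) T
           = infsum (run_prob \<Delta> q) {\<omega> \<in> CRun \<Delta> q. K \<omega> \<in> T}"
    and "(\<lambda>k. infsum (run_prob \<Delta> q) {\<omega> \<in> CRun \<Delta> q. K \<omega> = k}) summable_on T"
proof -
  let ?B = "\<lambda>k. {\<omega> \<in> CRun \<Delta> q. K \<omega> = k}"
  have inj: "inj_on snd (Sigma T ?B)" by (auto simp: inj_on_def)
  have im: "snd ` Sigma T ?B = {\<omega> \<in> CRun \<Delta> q. K \<omega> \<in> T}" by (auto simp: image_iff)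
  have eq: "(\<lambda>(x, y). (\<lambda>k \<omega>. run_prob \<Delta> q \<omega>) x y) = run_prob \<Delta> q \<circ> snd" by auto
  have sm: "(\<lambda>(x, y). (\<lambda>k \<omega>. run_prob \<Delta> q \<omega>) x y) summable_on Sigma T ?B"
    unfolding eq using summable_on_reindex[OF inj, of "run_prob \<Delta> q"] run_prob_summable by blast
  show "(\<lambda>k. infsum (run_prob \<Delta> q) (?B k)) summable_on T"
    using summable_on_Sigma_banach[OF sm] by simp
  have "infsum (\<lambda>k. infsum (run_prob \<Delta> q) (?B k)) T = infsum (run_prob \<Delta> q \<circ> snd) (Sigma T ?B)"
    using infsum_Sigma'_banach[OF sm] unfolding eq by simp
  also have "\<dots> = infsum (run_prob \<Delta> q) {\<omega> \<in> CRun \<Delta> q. K \<omega> \<in> T}"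
    using infsum_reindex[OF inj, of "run_prob \<Delta> q"] im by simp
  finally show "infsum (\<lambda>k. infsum (run_prob \<Delta> q) (?B k)) T = infsum (run_prob \<Delta> q) {\<omega> \<in> CRun \<Delta> q. K \<omega> \<in> T}" .
qed

lemma PO_A_eq:
  fixes \<Delta> :: "('a::finite,'s::finite) fpfa_trans"
  assumes "Obf ` CRun \<Delta> q = Obs"
  shows "PO_A \<Delta> q \<psi> Obf Obs = infsum (run_prob \<Delta> q) {\<rho> \<in> CRun \<Delta> q. preimg \<Delta> q Obf (Obf \<rho>) \<subseteq> \<psi>}"
proof -
  have "PO_A \<Delta> q \<psi> Obf Obs = infsum (\<lambda>ob. infsum (run_prob \<Delta> q) {\<omega> \<in> CRun \<Delta> q. Obf \<omega> = ob}) {ob \<in> Obs. preimg \<Delta> q Obf ob \<subseteq> \<psi>}"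
    unfolding PO_A_def Prob_eq preimg_def ..
  also have "\<dots> = infsum (run_prob \<Delta> q) {\<omega> \<in> CRun \<Delta> q. Obf \<omega> \<in> {ob \<in> Obs. preimg \<Delta> q Obf ob \<subseteq> \<psi>}}"
    by (rule partition_sum)
  also have "{\<omega> \<in> CRun \<Delta> q. Obf \<omega> \<in> {ob \<in> Obs. preimg \<Delta> q Obf ob \<subseteq> \<psi>}} = {\<rho> \<in> CRun \<Delta> q. preimg \<Delta> q Obf (Obf \<rho>) \<subseteq> \<psi>}"
    using assms by auto
  finally show ?thesis .
qed

lemma nfa_run_eq: "nfa_run (unProb \<Delta> q0) q \<rho> = is_run \<Delta> q \<rho>"
  by (induction \<rho> arbitrary: q) (auto simp: unProb_def)

lemma acc_runs_eq: "acc_runs (unProb \<Delta> q0) = CRun \<Delta> q0"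
  by (auto simp: acc_runs_def CRun_def nfa_run_eq is_final_def) (auto simp: unProb_def)



definition hfun :: "real \<Rightarrow> real \<Rightarrow> real" where
  "hfun j m = (if j = 0 then 0 else - j * log 2 (j / m))"

lemma hfun_nonneg: "0 \<le> j \<Longrightarrow> j \<le> m \<Longrightarrow> 0 \<le> hfun j m"
proof (cases "j = 0")
  case False
  assume a: "0 \<le> j" "j \<le> m"
  then have "0 < j / m" "j / m \<le> 1" using False by auto
  then have "log 2 (j / m) \<le> 0" by simp
  then show ?thesis using a False by (simp add: hfun_def mult_nonneg_nonpos)
qed (simp add: hfun_def)

lemma hfun_pos: "0 < j \<Longrightarrow> j < m \<Longrightarrow> 0 < hfun j m"
proof -
  assume a: "0 < j" "j < m"
  then have "0 < j / m" "j / m < 1" by auto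
  then have "log 2 (j / m) < 0" by simp
  then show ?thesis using a by (simp add: hfun_def mult_pos_neg)
qed

lemma hfun_le: "0 \<le> j \<Longrightarrow> j \<le> m \<Longrightarrow> hfun j m \<le> (1 / ln 2) * (m - j)"
proof (cases "j = 0")
  case False
  assume a: "0 \<le> j" "j \<le> m"
  then have jp: "0 < j" and mp: "0 < m" using False by auto
  have "hfun j m = j * ln (m / j) / ln 2"
    using jp mp by (simp add: hfun_def log_def ln_div) (metis minus_diff_eq minus_divide_left mult_minus_right)
  also have "\<dots> \<le> j * (m / j - 1) / ln 2"
    using jp mp by (intro divide_right_mono mult_left_mono ln_le_minus_one) auto
  also have "\<dots> = (1 / ln 2) * (m - j)" using jp by (simp add: field_simps)
  finally show ?thesis .
qed (use hfun_def in simp)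

lemma hfun_zero: "j = 0 \<or> j = m \<Longrightarrow> hfun j m = 0"
  by (auto simp: hfun_def)

lemma entropy_iff:
  fixes \<Delta> :: "('a::finite,'s::finite) fpfa_trans" and Obf :: "('a \<times> 's) list \<Rightarrow> 'o"
  assumes "fpfa \<Delta>"
  shows "cond_entropy (Prob \<Delta> q0) (CRun \<Delta> q0) (indicator \<phi> :: ('a \<times> 's) list \<Rightarrow> real) Obf = 0
     \<longleftrightarrow> (\<forall>\<rho>\<in>CRun \<Delta> q0. preimg \<Delta> q0 Obf (Obf \<rho>) \<subseteq> \<phi> \<or> preimg \<Delta> q0 Obf (Obf \<rho>) \<subseteq> CRun \<Delta> q0 - \<phi>)"
proof -
  let ?P = "infsum (run_prob \<Delta> q0)"
  let ?ind = "indicator \<phi> :: ('a \<times> 's) list \<Rightarrow> real"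
  define J where "J x y = ?P {\<omega> \<in> CRun \<Delta> q0. ?ind \<omega> = x \<and> Obf \<omega> = y}" for x y
  define M where "M y = ?P {\<omega> \<in> CRun \<Delta> q0. Obf \<omega> = y}" for y
  define I where "I = ?ind ` CRun \<Delta> q0 \<times> Obf ` CRun \<Delta> q0"
  define g where "g = (\<lambda>(x,y). hfun (J x y) (M y))"
  have E: "cond_entropy (Prob \<Delta> q0) (CRun \<Delta> q0) ?ind Obf = infsum g I"
    unfolding cond_entropy_def Prob_eq J_def M_def hfun_def I_def Let_def g_def by (simp add: case_prod_unfold)
  have xval: "x = 0 \<or> x = 1" if "x \<in> ?ind ` CRun \<Delta> q0" for x
    using that by (auto simp: indicator_def)
  have split: "M y = J x y + J (1 - x) y" if "x = 0 \<or> x = 1" for x y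
  proof -
    have eqs: "{\<omega> \<in> CRun \<Delta> q0. Obf \<omega> = y} = {\<omega> \<in> CRun \<Delta> q0. ?ind \<omega> = x \<and> Obf \<omega> = y} \<union> {\<omega> \<in> CRun \<Delta> q0. ?ind \<omega> = 1 - x \<and> Obf \<omega> = y}"
      using that by (auto simp: indicator_def)
    have dis: "{\<omega> \<in> CRun \<Delta> q0. ?ind \<omega> = x \<and> Obf \<omega> = y} \<inter> {\<omega> \<in> CRun \<Delta> q0. ?ind \<omega> = 1 - x \<and> Obf \<omega> = y} = {}"
      using that by auto
    show ?thesis unfolding M_def J_def eqs by (rule P_add[OF dis])
  qed
  have Jnn: "0 \<le> J x y" for x y unfolding J_def by (rule P_nonneg)
  have bnd: "0 \<le> J x y \<and> J x y \<le> M y" if "(x,y) \<in> I" for x y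
  proof -
    have "x \<in> ?ind ` CRun \<Delta> q0" using that unfolding I_def by blast
    then have "M y = J x y + J (1 - x) y" by (intro split xval)
    then show ?thesis using Jnn[of "1-x" y] Jnn[of x y] by linarith
  qed
  have gnn: "0 \<le> g k" if "k \<in> I" for k
  proof -
    obtain x y where k: "k = (x,y)" by fastforce
    show ?thesis unfolding k g_def using bnd[of x y] that k by (simp add: hfun_nonneg)
  qed
  define Jp where "Jp k = ?P {\<omega> \<in> CRun \<Delta> q0. (?ind \<omega>, Obf \<omega>) = k}" for k
  define flip where "flip = (\<lambda>(x::real, y::'o). (1 - x, y))"
  have injf: "inj_on flip I" unfolding flip_def by (auto simp: inj_on_def)
  have "Jp summable_on (flip ` I)" unfolding Jp_def by (rule partition_sum(2))
  then have "(Jp \<circ> flip) summable_on I" using summable_on_reindex[OF injf] by blast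
  then have s1: "(\<lambda>k. (1 / ln 2) * (Jp \<circ> flip) k) summable_on I" by (rule summable_on_cmult_right)
  have Jpflip: "(Jp \<circ> flip) (x, y) = J (1 - x) y" for x y
    unfolding Jp_def J_def flip_def by simp
  have gle: "g k \<le> (1 / ln 2) * (Jp \<circ> flip) k" if "k \<in> I" for k
  proof -
    obtain x y where k: "k = (x,y)" by fastforce
    have xin: "x \<in> ?ind ` CRun \<Delta> q0" using that k unfolding I_def by blast
    have "g k = hfun (J x y) (M y)" unfolding g_def k by simp
    also have "\<dots> \<le> (1 / ln 2) * (M y - J x y)" using bnd[of x y] that k by (intro hfun_le) auto
    also have "M y - J x y = J (1 - x) y" using split[OF xval[OF xin]] by simp
    finally show ?thesis unfolding k Jpflip .
  qed
  have gsum: "g summable_on I" by (rule summable_on_comparison_test[OF s1 gle gnn])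
  show ?thesis
  proof
    assume E0: "cond_entropy (Prob \<Delta> q0) (CRun \<Delta> q0) ?ind Obf = 0"
    show "\<forall>\<rho>\<in>CRun \<Delta> q0. preimg \<Delta> q0 Obf (Obf \<rho>) \<subseteq> \<phi> \<or> preimg \<Delta> q0 Obf (Obf \<rho>) \<subseteq> CRun \<Delta> q0 - \<phi>"
    proof (rule ccontr)
      assume "\<not> ?thesis"
      then obtain \<rho>0 \<rho>1 \<rho>2 where r: "\<rho>0 \<in> CRun \<Delta> q0" "\<rho>1 \<in> CRun \<Delta> q0" "\<rho>2 \<in> CRun \<Delta> q0"
        "Obf \<rho>1 = Obf \<rho>0" "Obf \<rho>2 = Obf \<rho>0" "\<rho>1 \<in> \<phi>" "\<rho>2 \<notin> \<phi>"
        unfolding preimg_def by blast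
      define y where "y = Obf \<rho>0"
      have J1: "J 1 y > 0" unfolding J_def using r by (intro P_pos[of \<rho>1]) (auto simp: y_def)
      have J0: "J 0 y > 0" unfolding J_def using r by (intro P_pos[of \<rho>2]) (auto simp: y_def)
      have "M y = J 1 y + J 0 y" using split[of 1 y] by simp
      then have "0 < g (1, y)" unfolding g_def using J1 J0 by (auto intro!: hfun_pos)
      moreover have "(1, y) \<in> I" unfolding I_def y_def using r
        by (auto intro!: image_eqI[of 1 ?ind \<rho>1])
      moreover have "g (1, y) = 0" using nonneg_infsum_le_0D[of g I "(1,y)"] E0 E gsum gnn \<open>(1, y) \<in> I\<close> by simp
      ultimately show False by simp
    qed
  next
    assume pure: "\<forall>\<rho>\<in>CRun \<Delta> q0. preimg \<Delta> q0 Obf (Obf \<rho>) \<subseteq> \<phi> \<or> preimg \<Delta> q0 Obf (Obf \<rho>) \<subseteq> CRun \<Delta> q0 - \<phi>"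
    have "g k = 0" if kI: "k \<in> I" for k
    proof -
      obtain x \<rho>0 where k: "k = (x, Obf \<rho>0)" "\<rho>0 \<in> CRun \<Delta> q0" using kI unfolding I_def by auto
      have "preimg \<Delta> q0 Obf (Obf \<rho>0) \<subseteq> \<phi> \<or> preimg \<Delta> q0 Obf (Obf \<rho>0) \<subseteq> CRun \<Delta> q0 - \<phi>"
        using pure k(2) by blast
      then obtain c where c: "\<And>\<omega>. \<omega> \<in> CRun \<Delta> q0 \<Longrightarrow> Obf \<omega> = Obf \<rho>0 \<Longrightarrow> ?ind \<omega> = c"
      proof
        assume h: "preimg \<Delta> q0 Obf (Obf \<rho>0) \<subseteq> \<phi>"
        have "?ind \<omega> = 1" if "\<omega> \<in> CRun \<Delta> q0" "Obf \<omega> = Obf \<rho>0" for \<omega>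
        proof -
          have "\<omega> \<in> preimg \<Delta> q0 Obf (Obf \<rho>0)" using that unfolding preimg_def by blast
          then have "\<omega> \<in> \<phi>" using h by blast
          then show ?thesis by simp
        qed
        then show thesis using that by blast
      next
        assume h: "preimg \<Delta> q0 Obf (Obf \<rho>0) \<subseteq> CRun \<Delta> q0 - \<phi>"
        have "?ind \<omega> = 0" if "\<omega> \<in> CRun \<Delta> q0" "Obf \<omega> = Obf \<rho>0" for \<omega>
        proof -
          have "\<omega> \<in> preimg \<Delta> q0 Obf (Obf \<rho>0)" using that unfolding preimg_def by blast
          then have "\<omega> \<notin> \<phi>" using h by blast
          then show ?thesis by simp
        qed
        then show thesis using that by blast
      qed
      have "{\<omega> \<in> CRun \<Delta> q0. ?ind \<omega> = x \<and> Obf \<omega> = Obf \<rho>0} = {\<omega> \<in> CRun \<Delta> q0. Obf \<omega> = Obf \<rho>0}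
          \<or> {\<omega> \<in> CRun \<Delta> q0. ?ind \<omega> = x \<and> Obf \<omega> = Obf \<rho>0} = {}"
      proof (cases "x = c")
        case True
        have "{\<omega> \<in> CRun \<Delta> q0. ?ind \<omega> = x \<and> Obf \<omega> = Obf \<rho>0} = {\<omega> \<in> CRun \<Delta> q0. Obf \<omega> = Obf \<rho>0}"
        proof (rule Collect_cong)
          fix \<omega> show "(\<omega> \<in> CRun \<Delta> q0 \<and> ?ind \<omega> = x \<and> Obf \<omega> = Obf \<rho>0) = (\<omega> \<in> CRun \<Delta> q0 \<and> Obf \<omega> = Obf \<rho>0)"
            using c[of \<omega>] True by auto
        qed
        then show ?thesis by (rule disjI1)
      next
        case False
        have "{\<omega> \<in> CRun \<Delta> q0. ?ind \<omega> = x \<and> Obf \<omega> = Obf \<rho>0} = {}"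
        proof (rule equals0I)
          fix \<omega> assume "\<omega> \<in> {\<omega> \<in> CRun \<Delta> q0. ?ind \<omega> = x \<and> Obf \<omega> = Obf \<rho>0}"
          then show False using c[of \<omega>] False by auto
        qed
        then show ?thesis by (rule disjI2)
      qed
      then have "J x (Obf \<rho>0) = M (Obf \<rho>0) \<or> J x (Obf \<rho>0) = 0"
      proof (elim disjE)
        assume e: "{\<omega> \<in> CRun \<Delta> q0. ?ind \<omega> = x \<and> Obf \<omega> = Obf \<rho>0} = {\<omega> \<in> CRun \<Delta> q0. Obf \<omega> = Obf \<rho>0}"
        show ?thesis unfolding J_def M_def e by (rule disjI1) (rule refl)
      next
        assume e: "{\<omega> \<in> CRun \<Delta> q0. ?ind \<omega> = x \<and> Obf \<omega> = Obf \<rho>0} = {}"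
        show ?thesis unfolding J_def e by (rule disjI2) (rule infsum_empty)
      qed
      then have "hfun (J x (Obf \<rho>0)) (M (Obf \<rho>0)) = 0" by (metis hfun_zero)
      then show ?thesis unfolding g_def k by simp
    qed
    then show "cond_entropy (Prob \<Delta> q0) (CRun \<Delta> q0) ?ind Obf = 0" unfolding E by (rule infsum_0)
  qed
qed


theorem proposition1:
  fixes \<Delta> :: "('a::finite, 's::finite) fpfa_trans" and q0 :: 's
    and \<phi> :: "('a \<times> 's) list set" and Obf :: "('a \<times> 's) list \<Rightarrow> 'o" and Obs :: "'o set"
  assumes "fpfa \<Delta>"
    and "\<phi> \<subseteq> CRun \<Delta> q0"
    and "Obf ` CRun \<Delta> q0 = Obs"
  shows "(0 \<le> PO_A \<Delta> q0 \<phi> Obf Obs \<and> PO_A \<Delta> q0 \<phi> Obf Obs \<le> 1 \<and>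
          0 \<le> PO_S \<Delta> q0 \<phi> Obf Obs \<and> PO_S \<Delta> q0 \<phi> Obf Obs \<le> 1)
       \<and> (PO_A \<Delta> q0 \<phi> Obf Obs = 0 \<longleftrightarrow> opaque (unProb \<Delta> q0) \<phi> (unProb_obs Obf) Obs)
       \<and> (PO_S \<Delta> q0 \<phi> Obf Obs = 0 \<longleftrightarrow> sym_opaque (unProb \<Delta> q0) \<phi> (unProb_obs Obf) Obs)
       \<and> (PO_A \<Delta> q0 \<phi> Obf Obs = 1 \<longleftrightarrow> \<phi> = CRun \<Delta> q0)
       \<and> (PO_S \<Delta> q0 \<phi> Obf Obs = 1 \<longleftrightarrow>
            cond_entropy (Prob \<Delta> q0) (CRun \<Delta> q0) (indicator \<phi> :: ('a \<times> 's) list \<Rightarrow> real) Obf = 0)"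
proof -
  let ?P = "infsum (run_prob \<Delta> q0)"
  define A where "A = {\<rho> \<in> CRun \<Delta> q0. preimg \<Delta> q0 Obf (Obf \<rho>) \<subseteq> \<phi>}"
  define B where "B = {\<rho> \<in> CRun \<Delta> q0. preimg \<Delta> q0 Obf (Obf \<rho>) \<subseteq> CRun \<Delta> q0 - \<phi>}"
  have hA: "PO_A \<Delta> q0 \<phi> Obf Obs = ?P A" unfolding A_def by (rule PO_A_eq[OF assms(3)])
  have hB: "PO_A \<Delta> q0 (CRun \<Delta> q0 - \<phi>) Obf Obs = ?P B" unfolding B_def by (rule PO_A_eq[OF assms(3)])
  have self: "\<rho> \<in> preimg \<Delta> q0 Obf (Obf \<rho>)" if "\<rho> \<in> CRun \<Delta> q0" for \<rho>
    using that by (simp add: preimg_def)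
  have AB: "A \<inter> B = {}" unfolding A_def B_def using self by blast
  have hS: "PO_S \<Delta> q0 \<phi> Obf Obs = ?P (A \<union> B)"
    unfolding PO_S_def hA hB by (rule P_add[OF AB, symmetric])
  have ACr: "A \<subseteq> CRun \<Delta> q0" "B \<subseteq> CRun \<Delta> q0" unfolding A_def B_def by auto
  have Obs_eq: "Obs = Obf ` CRun \<Delta> q0" using assms(3) by simp
  have op: "opaque (unProb \<Delta> q0) \<phi> (unProb_obs Obf) Obs \<longleftrightarrow> A = {}"
    unfolding opaque_def acc_runs_eq unProb_obs_def Obs_eq A_def preimg_def by auto
  have sop: "sym_opaque (unProb \<Delta> q0) \<phi> (unProb_obs Obf) Obs \<longleftrightarrow> A \<union> B = {}"
    unfolding sym_opaque_def op unfolding acc_runs_eq unProb_obs_def Obs_eq B_def preimg_def by auto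
  have p1: "0 \<le> PO_A \<Delta> q0 \<phi> Obf Obs \<and> PO_A \<Delta> q0 \<phi> Obf Obs \<le> 1 \<and>
          0 \<le> PO_S \<Delta> q0 \<phi> Obf Obs \<and> PO_S \<Delta> q0 \<phi> Obf Obs \<le> 1"
    unfolding hA hS by (simp add: P_nonneg P_le1[OF assms(1)])
  have p2: "PO_A \<Delta> q0 \<phi> Obf Obs = 0 \<longleftrightarrow> opaque (unProb \<Delta> q0) \<phi> (unProb_obs Obf) Obs"
    unfolding hA op P_zero_iff using ACr by blast
  have p3: "PO_S \<Delta> q0 \<phi> Obf Obs = 0 \<longleftrightarrow> sym_opaque (unProb \<Delta> q0) \<phi> (unProb_obs Obf) Obs"
    unfolding hS sop P_zero_iff using ACr by blast
  have p4: "PO_A \<Delta> q0 \<phi> Obf Obs = 1 \<longleftrightarrow> \<phi> = CRun \<Delta> q0"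
    unfolding hA P_one_iff[OF assms(1)]
  proof
    assume "CRun \<Delta> q0 \<subseteq> A"
    then have "CRun \<Delta> q0 \<subseteq> \<phi>" unfolding A_def using self by blast
    then show "\<phi> = CRun \<Delta> q0" using assms(2) by blast
  next
    assume "\<phi> = CRun \<Delta> q0"
    then show "CRun \<Delta> q0 \<subseteq> A" unfolding A_def preimg_def by auto
  qed
  have p5: "PO_S \<Delta> q0 \<phi> Obf Obs = 1 \<longleftrightarrow>
            cond_entropy (Prob \<Delta> q0) (CRun \<Delta> q0) (indicator \<phi> :: ('a \<times> 's) list \<Rightarrow> real) Obf = 0"
    unfolding hS P_one_iff[OF assms(1)] entropy_iff[OF assms(1)] A_def B_def by blast
  show ?thesis using p1 p2 p3 p4 p5 by blast
qed

end
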